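(* Let $e_i\in\mathbb{R}^d$ have strictly positive coordinates and $\xi>0$. Then the budget correspondence $p\mapsto\mathcal B_i(p)$ is $(d^{3/2}/\xi^2)\|e_i\|$-Hausdorff Lipschitz on $\Delta_\xi$, i.e. for all $p_1,p_2\in\Delta_\xi$, $d_H(\mathcal B_i(p_1),\mathcal B_i(p_2))\le\frac{d^{3/2}}{\xi^2}\|e_i\|\,\|p_1-p_2\|$.
   Context: $\Delta_\xi=\{p\in\mathbb{R}^d:p_k>\xi\ \forall k\in[d],\ \sum_{k=1}^d p_k=1\}$; $\mathcal B_i(p)=\{x\in\mathbb{R}^d_+:p\cdot x\le p\cdot e_i\}$ is the budget set of agent $i$ with endowment $e_i$; $d_H$ is the Hausdorff distance with respect to the Euclidean norm $\|\cdot\|$. *)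

theory Defs
  imports "HOL-Analysis.Analysis"
begin

definition hausdorff_dist :: "'a::metric_space set \<Rightarrow> 'a set \<Rightarrow> real" where
  "hausdorff_dist A B = max (SUP a\<in>A. infdist a B) (SUP b\<in>B. infdist b A)"

definition trimmed_simplex :: "real \<Rightarrow> (real ^ 'd) set" where
  "trimmed_simplex \<xi> = {p. (\<forall>k. p $ k > \<xi>) \<and> (\<Sum>k\<in>UNIV. p $ k) = 1}"

definition budget_set :: "real ^ 'd \<Rightarrow> real ^ 'd \<Rightarrow> (real ^ 'd) set" where
  "budget_set e p = {x. (\<forall>k. x $ k \<ge> 0) \<and> p \<bullet> x \<le> p \<bullet> e}"

end

theory Submission
  imports Defs
begin

lemma nonneg_norm_le_sum:
  fixes x :: "real ^ 'd"
  assumes "\<forall>k. x $ k \<ge> 0"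
  shows "norm x \<le> (\<Sum>k\<in>UNIV. x $ k)"
proof -
  have "norm x \<le> (\<Sum>k\<in>UNIV. \<bar>x $ k\<bar>)" by (rule norm_le_l1_cart)
  also have "\<dots> = (\<Sum>k\<in>UNIV. x $ k)" using assms by simp
  finally show ?thesis .
qed

lemma inner_lower:
  fixes x p :: "real ^ 'd"
  assumes "\<forall>k. x $ k \<ge> 0" "p \<in> trimmed_simplex \<xi>" "\<xi> > 0"
  shows "\<xi> * norm x \<le> p \<bullet> x"
proof -
  have "\<xi> * norm x \<le> \<xi> * (\<Sum>k\<in>UNIV. x $ k)"
    using nonneg_norm_le_sum[OF assms(1)] assms(3) by simp
  also have "\<dots> = (\<Sum>k\<in>UNIV. \<xi> * x $ k)" by (simp add: sum_distrib_left)
  also have "\<dots> \<le> (\<Sum>k\<in>UNIV. p $ k * x $ k)"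
    using assms(1,2) by (intro sum_mono mult_right_mono) (auto simp: trimmed_simplex_def less_imp_le)
  also have "\<dots> = p \<bullet> x" by (simp add: inner_vec_def)
  finally show ?thesis .
qed

lemma norm_simplex_le':
  assumes "p \<in> trimmed_simplex \<xi>" "\<xi> > 0"
  shows "norm p \<le> 1"
proof -
  have "\<forall>k. p $ k \<ge> 0" using assms by (auto simp: trimmed_simplex_def intro: less_imp_le order.strict_trans)
  then have "norm p \<le> (\<Sum>k\<in>UNIV. p $ k)" by (rule nonneg_norm_le_sum)
  then show ?thesis using assms by (simp add: trimmed_simplex_def)
qed

lemma key:
  fixes e :: "real ^ 'd"
  assumes "\<forall>k. e $ k > 0" "\<xi> > 0"
    and p1: "p1 \<in> trimmed_simplex \<xi>" and p2: "p2 \<in> trimmed_simplex \<xi>"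
    and x: "x \<in> budget_set e p1"
  shows "infdist x (budget_set e p2) \<le> (1 + \<xi>) / \<xi>\<^sup>2 * norm e * norm (p1 - p2)"
proof -
  have xnn: "\<forall>k. x $ k \<ge> 0" and xb: "p1 \<bullet> x \<le> p1 \<bullet> e" using x by (auto simp: budget_set_def)
  have enn: "\<forall>k. e $ k \<ge> 0" using assms(1) by (simp add: less_imp_le)
  have p2nn: "\<forall>k. p2 $ k \<ge> 0" using p2 assms(2) by (auto simp: trimmed_simplex_def intro: less_imp_le order.strict_trans)
  have p2e: "p2 \<bullet> e \<ge> 0" using inner_lower[OF enn p2 assms(2)] assms(2)
    by (meson mult_nonneg_nonneg norm_ge_zero less_imp_le order_trans)
  have RHSnn: "0 \<le> (1 + \<xi>) / \<xi>\<^sup>2 * norm e * norm (p1 - p2)" using assms(2) by simp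
  have p1e: "p1 \<bullet> e \<le> norm e"
    using norm_cauchy_schwarz[of p1 e] norm_simplex_le'[OF p1 assms(2)]
    by (metis mult_right_mono norm_ge_zero mult_1 order_trans)
  have nx: "\<xi> * norm x \<le> norm e" using inner_lower[OF xnn p1 assms(2)] xb p1e by linarith
  have nx': "norm x \<le> norm e / \<xi>" using nx assms(2) by (simp add: field_simps)
  show ?thesis
  proof (cases "p2 \<bullet> x \<le> p2 \<bullet> e")
    case True
    then have "x \<in> budget_set e p2" using xnn by (simp add: budget_set_def)
    then show ?thesis using RHSnn by simp
  next
    case False
    define s where "s = p2 \<bullet> x"
    have spos: "s > 0" using False p2e s_def by linarith
    define t where "t = p2 \<bullet> e / s"
    define y where "y = t *\<^sub>R x"
    have t01: "0 \<le> t" "t \<le> 1" using spos p2e False by (auto simp: t_def s_def)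
    have yB: "y \<in> budget_set e p2"
    proof -
      have "\<forall>k. y $ k \<ge> 0" using xnn t01 by (simp add: y_def)
      moreover have "p2 \<bullet> y = p2 \<bullet> e" using spos by (simp add: y_def t_def s_def)
      ultimately show ?thesis by (simp add: budget_set_def)
    qed
    have "infdist x (budget_set e p2) \<le> dist x y" using yB by (rule infdist_le)
    also have "dist x y = (1 - t) * norm x"
    proof -
      have "x - y = (1 - t) *\<^sub>R x" by (simp add: y_def algebra_simps)
      then show ?thesis using t01 by (simp add: dist_norm)
    qed
    also have "(1 - t) * norm x = (s - p2 \<bullet> e) * (norm x / s)"
      using spos by (simp add: t_def field_simps)
    also have "\<dots> \<le> (s - p2 \<bullet> e) * (1 / \<xi>)"
    proof (rule mult_left_mono)
      have "\<xi> * norm x \<le> s" using inner_lower[OF xnn p2 assms(2)] s_def by simp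
      then show "norm x / s \<le> 1 / \<xi>" using spos assms(2) by (simp add: field_simps)
      show "0 \<le> s - p2 \<bullet> e" using False s_def by simp
    qed
    also have "\<dots> \<le> (norm (p1 - p2) * (norm e / \<xi> + norm e)) * (1 / \<xi>)"
    proof (rule mult_right_mono)
      have "s - p2 \<bullet> e \<le> (p2 - p1) \<bullet> (x - e)"
        using xb by (simp add: s_def inner_diff_left inner_diff_right)
      also have "\<dots> \<le> norm (p2 - p1) * norm (x - e)" by (rule norm_cauchy_schwarz)
      also have "\<dots> \<le> norm (p1 - p2) * (norm e / \<xi> + norm e)"
      proof -
        have "norm (x - e) \<le> norm x + norm e" by (rule norm_triangle_ineq4)
        then have "norm (x - e) \<le> norm e / \<xi> + norm e" using nx' by linarith
        then show ?thesis by (simp add: norm_minus_commute mult_left_mono)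
      qed
      finally show "s - p2 \<bullet> e \<le> norm (p1 - p2) * (norm e / \<xi> + norm e)" .
      show "0 \<le> 1 / \<xi>" using assms(2) by simp
    qed
    also have "\<dots> = (1 + \<xi>) / \<xi>\<^sup>2 * norm e * norm (p1 - p2)"
      using assms(2) by (simp add: field_simps power2_eq_square)
    finally show ?thesis .
  qed
qed

lemma card1_eq:
  assumes "CARD('d) = 1" "p1 \<in> trimmed_simplex \<xi>" "p2 \<in> trimmed_simplex \<xi>"
  shows "p1 = (p2 :: real ^ 'd)"
proof -
  obtain a :: 'd where U: "UNIV = {a}" using assms(1) card_1_singletonE by blast
  have "p1 $ a = 1" "p2 $ a = 1" using assms(2,3) by (auto simp: trimmed_simplex_def U)
  then show ?thesis using U by (simp add: vec_eq_iff) (metis UNIV_I singletonD)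
qed

lemma const_le:
  fixes p1 p2 :: "real ^ 'd"
  assumes "\<xi> > 0" "p1 \<in> trimmed_simplex \<xi>" "p2 \<in> trimmed_simplex \<xi>"
  shows "(1 + \<xi>) / \<xi>\<^sup>2 * norm e * norm (p1 - p2)
     \<le> (real CARD('d) powr (3/2) / \<xi>\<^sup>2) * norm e * norm (p1 - p2)"
proof (cases "CARD('d) = 1")
  case True
  then show ?thesis using card1_eq[OF True assms(2,3)] by simp
next
  case False
  then have d2: "real CARD('d) \<ge> 2" 
  proof -
    have "CARD('d) > 0" by simp
    then have "CARD('d) \<ge> 2" using False by linarith
    then show ?thesis by simp
  qed
  have xi1: "\<xi> < 1"
  proof -
    obtain a :: 'd where True by simp
    have "(\<Sum>k\<in>UNIV. p1 $ k) = 1" and pos: "\<forall>k. p1 $ k > \<xi>" using assms(2) by (auto simp: trimmed_simplex_def)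
    have "p1 $ a \<le> (\<Sum>k\<in>UNIV. p1 $ k)"
      using pos assms(1) by (intro member_le_sum) (auto intro: less_imp_le order.strict_trans)
    then show ?thesis using pos \<open>(\<Sum>k\<in>UNIV. p1 $ k) = 1\<close> by (metis less_le_trans)
  qed
  have "real CARD('d) powr (3/2) \<ge> real CARD('d) powr 1"
    using d2 by (intro powr_mono) auto
  then have c: "1 + \<xi> \<le> real CARD('d) powr (3/2)" using d2 xi1 by simp
  show ?thesis
    using c assms(1) by (intro mult_right_mono divide_right_mono) auto
qed

theorem mainTheorem18:
  fixes e :: "real ^ 'd" and \<xi> :: real
  assumes "\<forall>k. e $ k > 0"
    and "\<xi> > 0"
    and "p1 \<in> trimmed_simplex \<xi>" and "p2 \<in> trimmed_simplex \<xi>"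
  shows "hausdorff_dist (budget_set e p1) (budget_set e p2)
         \<le> (real CARD('d) powr (3/2) / \<xi>\<^sup>2) * norm e * norm (p1 - p2)"
proof -
  let ?C = "(real CARD('d) powr (3/2) / \<xi>\<^sup>2) * norm e * norm (p1 - p2)"
  have ne: "0 \<in> budget_set e p" if "p \<in> trimmed_simplex \<xi>" for p
  proof -
    have "\<forall>k. e $ k \<ge> 0" using assms(1) by (simp add: less_imp_le)
    from inner_lower[OF this that assms(2)] assms(2) have "0 \<le> p \<bullet> e"
      by (meson mult_nonneg_nonneg norm_ge_zero less_imp_le order_trans)
    then show ?thesis by (simp add: budget_set_def)
  qed
  have A: "(SUP a\<in>budget_set e p1. infdist a (budget_set e p2)) \<le> ?C"
  proof (rule cSUP_least)
    show "budget_set e p1 \<noteq> {}" using ne[OF assms(3)] by blast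
    fix x assume "x \<in> budget_set e p1"
    from key[OF assms this] const_le[OF assms(2,3,4), of e]
    show "infdist x (budget_set e p2) \<le> ?C" by linarith
  qed
  have B: "(SUP a\<in>budget_set e p2. infdist a (budget_set e p1)) \<le> ?C"
  proof (rule cSUP_least)
    show "budget_set e p2 \<noteq> {}" using ne[OF assms(4)] by blast
    fix x assume "x \<in> budget_set e p2"
    from key[OF assms(1,2,4,3) this] const_le[OF assms(2,3,4), of e]
    show "infdist x (budget_set e p1) \<le> ?C" by (simp add: norm_minus_commute)
  qed
  show ?thesis using A B by (simp add: hausdorff_dist_def)
qed

end
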